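(* The generalized DFT $\mathcal{F}:V_\Omega\to V_A$ and the generalized IDFT $\mathcal{F}^{-1}:V_A\to V_\Omega$ (defined below) are mutually inverse linear maps: $\mathcal{F}^{-1}(\mathcal{F}((c_{\underline\omega})_\Omega))=(c_{\underline\omega})_\Omega$ for all $(c_{\underline\omega})_\Omega\in V_\Omega$ and $\mathcal{F}(\mathcal{F}^{-1}((h_{\underline a})_A))=(h_{\underline a})_A$ for all $(h_{\underline a})_A\in V_A$.
   Context: Let $q$ be a prime power, $\mathbb{F}_q$ the field with $q$ elements, and $N\ge 1$ an integer. For a finite set $S$, $V_S$ denotes the $\mathbb{F}_q$-vector space of vectors $(v_s)_{S}=(v_s)_{s\in S}$ with entries in $\mathbb{F}_q$ indexed by $S$. Let $A=A_N=\{0,1,\dots,q-1\}^N$ and $\Omega=\Omega_N=\mathbb{F}_q^N$. For $\underline\omega=(\omega_1,\dots,\omega_N)\in\mathbb{F}_q^N$ and $\underline a=(a_1,\dots,a_N)\in\mathbb{N}_0^N$ write $\underline\omega^{\underline a}=\omega_1^{a_1}\cdots\omega_N^{a_N}$, with the convention $0^0=1$. Generalized DFT: $\mathcal{F}=\mathcal{F}_N:V_\Omega\to V_A$, $(c_{\underline\omega})_\Omega\mapsto(h_{\underline a})_A$ with $h_{\underline a}=\sum_{\underline\omega\in\Omega}c_{\underline\omega}\underline\omega^{\underline a}$. Generalized IDFT: $\mathcal{F}^{-1}=\mathcal{F}_N^{-1}:V_A\to V_\Omega$, $(h_{\underline a})_A\mapsto(c_{\underline\omega})_\Omega$, defined as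 follows. For $\underline\omega\in\Omega$ let $I=I_{\underline\omega}=\{i_1<\dots<i_m\}=\{i:\omega_i\ne0\}\subseteq\{1,\dots,N\}$ (so $m$ is the number of nonzero coordinates). Then $$c_{\underline\omega}=(-1)^m\sum_{l_1,\dots,l_m=1}^{q-1}\Big\{\sum_{J\subseteq\{1,\dots,N\}\setminus I}(-1)^{|J|}h_{\underline i(I,J)}\Big\}\omega_{i_1}^{-l_1}\cdots\omega_{i_m}^{-l_m},$$ where $J$ runs over all subsets of $\{1,\dots,N\}\setminus I$ and $\underline i(I,J)=(b_1,\dots,b_N)\in A$ is given by $b_{i_j}=l_j$ for $1\le j\le m$, $b_i=q-1$ for $i\in J$, and $b_i=0$ for $i\notin I\cup J$. (For $m=0$ the outer sum has the single empty term.) *)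

theory Defs
  imports Main "HOL-Library.FuncSet"
begin

text \<open>Coordinates are indexed by 0..<N (instead of 1..N). The field F_q is an
arbitrary finite field type 'a, q = CARD('a). A vector in V_S is a function S \<Rightarrow> 'a (only values on S matter).\<close>

definition Omega :: "nat \<Rightarrow> 'a::{finite,field} list set" where
  "Omega N = {w. length w = N}"

definition Aset :: "nat \<Rightarrow> nat \<Rightarrow> nat list set" where
  "Aset q N = {a. length a = N \<and> (\<forall>x\<in>set a. x < q)}"

definition monpow :: "'a::field list \<Rightarrow> nat list \<Rightarrow> 'a" where
  "monpow w a = (\<Prod>i<length w. (w ! i) ^ (a ! i))"

definition DFT :: "nat \<Rightarrow> ('a::{finite,field} list \<Rightarrow> 'a) \<Rightarrow> (nat list \<Rightarrow> 'a)" where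
  "DFT N c = (\<lambda>a. \<Sum>w\<in>Omega N. c w * monpow w a)"

definition idx :: "nat \<Rightarrow> nat \<Rightarrow> nat set \<Rightarrow> nat set \<Rightarrow> (nat \<Rightarrow> nat) \<Rightarrow> nat list" where
  "idx q N I J l = map (\<lambda>i. if i \<in> I then l i else if i \<in> J then q - 1 else 0) [0..<N]"

definition IDFT :: "nat \<Rightarrow> (nat list \<Rightarrow> 'a::{finite,field}) \<Rightarrow> ('a list \<Rightarrow> 'a)" where
  "IDFT N h = (\<lambda>w.
     let q = card (UNIV :: 'a set); I = {i. i < N \<and> w ! i \<noteq> 0}; m = card I in
     (-1) ^ m * (\<Sum>l\<in>PiE I (\<lambda>_. {1..q-1}).
        (\<Sum>J\<in>Pow ({0..<N} - I). (-1) ^ card J * h (idx q N I J l))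
        * (\<Prod>i\<in>I. inverse (w ! i) ^ l i)))"

end

theory Submission imports Defs begin

lemma ff_card_ge2: "card (UNIV::'a::{finite,field} set) \<ge> 2"
proof -
  have "{0::'a,1} \<subseteq> UNIV" by simp
  hence "card {0::'a,1} \<le> card (UNIV::'a set)" by (rule card_mono[OF finite_UNIV])
  thus ?thesis by simp
qed

lemma ff_char: "(of_nat (card (UNIV::'a::{finite,field} set)) :: 'a) = 0"
proof -
  have b: "bij_betw (\<lambda>y. y + (1::'a)) UNIV UNIV"
    by (rule bij_betwI[where g="\<lambda>y. y - 1"]) auto
  have "(\<Sum>y\<in>UNIV. y) = (\<Sum>y\<in>UNIV. y + (1::'a))"
    using sum.reindex_bij_betw[OF b, of "\<lambda>y. y"] by simp
  also have "\<dots> = (\<Sum>y\<in>UNIV. y) + of_nat (card (UNIV::'a set))"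
    by (simp add: sum.distrib)
  finally show ?thesis by simp
qed

lemma ff_fermat:
  assumes "(x::'a::{finite,field}) \<noteq> 0"
  shows "x ^ (card (UNIV::'a set) - 1) = 1"
proof -
  let ?U = "UNIV - {0::'a}"
  have cU: "card ?U = card (UNIV::'a set) - 1" by (simp add: card_Diff_subset)
  have b: "bij_betw (\<lambda>y. x * y) ?U ?U"
    by (rule bij_betwI[where g="\<lambda>y. y / x"]) (use assms in auto)
  have "(\<Prod>y\<in>?U. y) = (\<Prod>y\<in>?U. x * y)"
    using prod.reindex_bij_betw[OF b, of "\<lambda>y. y"] by simp
  also have "\<dots> = x ^ card ?U * (\<Prod>y\<in>?U. y)" by (simp add: prod.distrib)
  finally have "1 * (\<Prod>y\<in>?U. y) = x ^ card ?U * (\<Prod>y\<in>?U. y)" by simp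
  moreover have "(\<Prod>y\<in>?U. y) \<noteq> 0" by simp
  ultimately show ?thesis using cU by (metis mult_right_cancel)
qed

lemma ff_pow_q: "(x::'a::{finite,field}) ^ card (UNIV::'a set) = x"
proof (cases "x = 0")
  case True thus ?thesis using ff_card_ge2[where 'a='a] by simp
next
  case False
  have "x ^ card (UNIV::'a set) = x * x ^ (card (UNIV::'a set) - 1)"
    using ff_card_ge2[where 'a='a] by (metis Suc_diff_1 Suc_le_lessD less_imp_le numeral_2_eq_2 power_Suc zero_less_Suc less_le_trans)
  thus ?thesis using ff_fermat[OF False] by simp
qed

lemma ff_geom:
  "(\<Sum>k\<in>{1..card (UNIV::'a::{finite,field} set) - 1}. (x::'a) ^ k) = (if x = 1 then -1 else 0)"
proof -
  let ?q = "card (UNIV::'a set)"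
  have q2: "?q \<ge> 2" by (rule ff_card_ge2)
  show ?thesis
  proof (cases "x = 1")
    case True
    have "(of_nat (?q - 1)::'a) = of_nat ?q - 1" using q2 by (simp add: of_nat_diff)
    thus ?thesis using True ff_char[where 'a='a] by simp
  next
    case False
    have "(1 - x) * (\<Sum>k=1..?q - 1. x ^ k) = x ^ 1 - x ^ Suc (?q - 1)"
      by (rule sum_gp_multiplied) (use q2 in auto)
    also have "Suc (?q - 1) = ?q" using q2 by simp
    finally have "(1 - x) * (\<Sum>k=1..?q - 1. x ^ k) = 0" using ff_pow_q[of x] by simp
    thus ?thesis using False by simp
  qed
qed


lemma prod_ind: "finite S \<Longrightarrow> (\<Prod>i\<in>S. (if P i then 1 else 0::'a::comm_semiring_1)) = (if \<forall>i\<in>S. P i then 1 else 0)"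
  by (induction S rule: finite_induct) auto

lemma prod_split3:
  assumes "finite S" "I \<subseteq> S" "J \<subseteq> S - I"
  shows "(\<Prod>i\<in>S. if i\<in>I then a i else if i\<in>J then b i else (1::'a::comm_monoid_mult)) = prod a I * prod b J"
proof -
  have "(\<Prod>i\<in>S. if i\<in>I then a i else if i\<in>J then b i else 1)
      = prod a (S \<inter> {x. x\<in>I}) * (\<Prod>i\<in>S \<inter> - {x. x\<in>I}. if i\<in>J then b i else 1)"
    by (rule prod.If_cases) (use assms in auto)
  also have "(\<Prod>i\<in>S \<inter> - {x. x\<in>I}. if i\<in>J then b i else 1) = prod b ((S \<inter> - {x. x\<in>I}) \<inter> {x. x\<in>J}) * (\<Prod>i\<in>(S \<inter> - {x. x\<in>I}) \<inter> - {x. x\<in>J}. 1)"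
    by (rule prod.If_cases) (use assms in auto)
  also have "S \<inter> {x. x\<in>I} = I" using assms by auto
  also have "(S \<inter> - {x. x\<in>I}) \<inter> {x. x\<in>J} = J" using assms by auto
  finally show ?thesis by simp
qed

lemma monpow_idx:
  fixes \<mu> :: "'a::{finite,field} list"
  assumes "length \<mu> = N" "I \<subseteq> {0..<N}" "J \<subseteq> {0..<N} - I"
  shows "monpow \<mu> (idx q N I J l) = (\<Prod>i\<in>I. (\<mu>!i) ^ l i) * (\<Prod>i\<in>J. (\<mu>!i) ^ (q - 1))"
proof -
  have "monpow \<mu> (idx q N I J l) = (\<Prod>i\<in>{0..<N}. if i\<in>I then (\<mu>!i) ^ l i else if i\<in>J then (\<mu>!i) ^ (q - 1) else 1)"
    unfolding monpow_def idx_def using assms(1) lessThan_atLeast0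
    by (intro prod.cong) auto
  also have "\<dots> = (\<Prod>i\<in>I. (\<mu>!i) ^ l i) * (\<Prod>i\<in>J. (\<mu>!i) ^ (q - 1))"
    by (rule prod_split3) (use assms in auto)
  finally show ?thesis .
qed


lemma kernel:
  fixes w \<mu> :: "'a::{finite,field} list"
  assumes lw: "length w = N" and lm: "length \<mu> = N"
  shows "IDFT N (monpow \<mu>) w = (if \<mu> = w then 1 else 0)"
proof -
  define q where "q = card (UNIV::'a set)"
  define I where "I = {i. i < N \<and> w ! i \<noteq> 0}"
  define C where "C = {0..<N} - I"
  define m where "m = card I"
  define ind where "ind i = (if \<mu>!i = w!i then 1 else 0::'a)" for i
  have q2: "q \<ge> 2" unfolding q_def by (rule ff_card_ge2)
  have IN: "I \<subseteq> {0..<N}" unfolding I_def by auto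
  have fI: "finite I" using IN finite_subset by blast
  have fC: "finite C" unfolding C_def by simp
  have inner: "(\<Sum>J\<in>Pow C. (-1) ^ card J * monpow \<mu> (idx q N I J l))
       = (\<Prod>i\<in>I. (\<mu>!i) ^ l i) * (\<Prod>i\<in>C. ind i)" for l
  proof -
    have "(\<Sum>J\<in>Pow C. (-1) ^ card J * monpow \<mu> (idx q N I J l))
        = (\<Sum>J\<in>Pow C. (\<Prod>i\<in>I. (\<mu>!i) ^ l i) * ((\<Prod>i\<in>J. - ((\<mu>!i) ^ (q - 1))) * (\<Prod>i\<in>C-J. 1)))"
    proof (rule sum.cong[OF refl])
      fix J assume "J \<in> Pow C"
      hence J: "J \<subseteq> {0..<N} - I" unfolding C_def by auto
      have "(\<Prod>i\<in>J. - ((\<mu>!i) ^ (q - 1))) = (-1) ^ card J * (\<Prod>i\<in>J. (\<mu>!i) ^ (q - 1))"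
      proof -
        have "(\<Prod>i\<in>J. - ((\<mu>!i) ^ (q - 1))) = (\<Prod>i\<in>J. (-1) * ((\<mu>!i) ^ (q - 1)))" by simp
        also have "\<dots> = (\<Prod>i\<in>J. (-1::'a)) * (\<Prod>i\<in>J. (\<mu>!i) ^ (q - 1))" by (rule prod.distrib)
        finally show ?thesis by simp
      qed
      then show "(-1) ^ card J * monpow \<mu> (idx q N I J l) = (\<Prod>i\<in>I. (\<mu>!i) ^ l i) * ((\<Prod>i\<in>J. - ((\<mu>!i) ^ (q - 1))) * (\<Prod>i\<in>C-J. 1))"
        using monpow_idx[OF lm IN J] by simp
    qed
    also have "\<dots> = (\<Prod>i\<in>I. (\<mu>!i) ^ l i) * (\<Prod>i\<in>C. - ((\<mu>!i) ^ (q - 1)) + 1)"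
      by (simp only: prod_add[OF fC, of "\<lambda>i. - ((\<mu>!i) ^ (q - 1))" "\<lambda>_. 1"] sum_distrib_left)
    also have "(\<Prod>i\<in>C. - ((\<mu>!i) ^ (q - 1)) + 1) = (\<Prod>i\<in>C. ind i)"
    proof (rule prod.cong[OF refl])
      fix i assume "i \<in> C"
      hence "w!i = 0" unfolding C_def I_def by auto
      thus "- ((\<mu>!i) ^ (q - 1)) + 1 = ind i"
        using ff_fermat[of "\<mu>!i"] q2 unfolding ind_def q_def by auto
    qed
    finally show ?thesis .
  qed
  have "IDFT N (monpow \<mu>) w = (-1) ^ m * (\<Sum>l\<in>PiE I (\<lambda>_. {1..q-1}).
        ((\<Prod>i\<in>I. (\<mu>!i) ^ l i) * (\<Prod>i\<in>C. ind i)) * (\<Prod>i\<in>I. inverse (w ! i) ^ l i))"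
    unfolding IDFT_def Let_def q_def[symmetric] I_def[symmetric] m_def[symmetric]
    using inner unfolding C_def by simp
  also have "\<dots> = (-1) ^ m * (\<Prod>i\<in>C. ind i) * (\<Sum>l\<in>PiE I (\<lambda>_. {1..q-1}). \<Prod>i\<in>I. (\<mu>!i * inverse (w!i)) ^ l i)"
    by (simp add: sum_distrib_left prod.distrib power_mult_distrib mult_ac)
  also have "(\<Sum>l\<in>PiE I (\<lambda>_. {1..q-1}). \<Prod>i\<in>I. (\<mu>!i * inverse (w!i)) ^ l i)
       = (\<Prod>i\<in>I. \<Sum>k\<in>{1..q-1}. (\<mu>!i * inverse (w!i)) ^ k)"
    by (rule prod_sum_PiE[symmetric]) (use fI in auto)
  also have "\<dots> = (\<Prod>i\<in>I. (-1) * ind i)"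
  proof (rule prod.cong[OF refl])
    fix i assume "i \<in> I"
    hence "w!i \<noteq> 0" unfolding I_def by auto
    hence "(\<mu>!i * inverse (w!i) = 1) = (\<mu>!i = w!i)" by (auto simp: field_simps)
    thus "(\<Sum>k\<in>{1..q-1}. (\<mu>!i * inverse (w!i)) ^ k) = (-1) * ind i"
      using ff_geom[of "\<mu>!i * inverse (w!i)"] unfolding q_def ind_def by simp
  qed
  also have "\<dots> = (\<Prod>i\<in>I. (-1::'a)) * (\<Prod>i\<in>I. ind i)" by (rule prod.distrib)
  also have "\<dots> = (-1) ^ m * (\<Prod>i\<in>I. ind i)" unfolding m_def prod_constant ..
  finally have "IDFT N (monpow \<mu>) w = ((-1) ^ m * (-1) ^ m) * ((\<Prod>i\<in>C. ind i) * (\<Prod>i\<in>I. ind i))"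
    by (simp add: mult_ac)
  also have "(\<Prod>i\<in>C. ind i) * (\<Prod>i\<in>I. ind i) = (\<Prod>i\<in>{0..<N}. ind i)"
    unfolding C_def by (rule prod.subset_diff[symmetric]) (use IN in auto)
  also have "\<dots> = (if \<forall>i\<in>{0..<N}. \<mu>!i = w!i then 1 else 0)"
    unfolding ind_def by (rule prod_ind) simp
  also have "(\<forall>i\<in>{0..<N}. \<mu>!i = w!i) = (\<mu> = w)"
    using lw lm by (metis atLeastLessThan_iff le0 list_eq_iff_nth_eq)
  finally show ?thesis by simp
qed


lemma DFT_lin: "DFT N (\<lambda>w. c w + s * d w) a = DFT N c a + s * DFT N d a"
  unfolding DFT_def by (simp add: sum.distrib sum_distrib_left algebra_simps)

lemma IDFT_lin: "IDFT N (\<lambda>a. h a + s * g a) w = IDFT N h w + s * IDFT N g w"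
  unfolding IDFT_def Let_def
  by (simp add: sum.distrib sum_distrib_left algebra_simps)

lemma IDFT_zero: "IDFT N (\<lambda>a. 0) w = 0"
  unfolding IDFT_def Let_def by simp

lemma IDFT_scale: "IDFT N (\<lambda>a. s * h a) w = s * IDFT N h w"
  using IDFT_lin[of N "\<lambda>a. 0" s h w] IDFT_zero[of N w] by simp

lemma IDFT_sum: "finite S \<Longrightarrow> IDFT N (\<lambda>a. \<Sum>x\<in>S. f x a) w = (\<Sum>x\<in>S. IDFT N (f x) w)"
proof (induction S rule: finite_induct)
  case empty thus ?case by (simp add: IDFT_zero)
next
  case (insert x S)
  have "IDFT N (\<lambda>a. \<Sum>y\<in>insert x S. f y a) w = IDFT N (\<lambda>a. f x a + 1 * (\<Sum>y\<in>S. f y a)) w"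
    using insert by simp
  also have "\<dots> = IDFT N (f x) w + IDFT N (\<lambda>a. \<Sum>y\<in>S. f y a) w"
    by (subst IDFT_lin) simp
  finally show ?case using insert by simp
qed

lemma finite_Omega: "finite (Omega N :: 'a::{finite,field} list set)"
proof -
  have "Omega N = {xs::'a list. set xs \<subseteq> UNIV \<and> length xs = N}" unfolding Omega_def by simp
  thus ?thesis using finite_lists_length_eq[OF finite_UNIV[where 'a='a], of N] by simp
qed

lemma card_Omega: "card (Omega N :: 'a::{finite,field} list set) = card (UNIV::'a set) ^ N"
proof -
  have "Omega N = {xs::'a list. set xs \<subseteq> UNIV \<and> length xs = N}" unfolding Omega_def by simp
  thus ?thesis using card_lists_length_eq[OF finite_UNIV[where 'a='a], of N] by simp
qed

lemma Aset_eq: "Aset q N = {xs. set xs \<subseteq> {..<q} \<and> length xs = N}"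
  unfolding Aset_def by auto

lemma finite_Aset: "finite (Aset q N)"
  unfolding Aset_eq by (simp add: finite_lists_length_eq)

lemma card_Aset: "card (Aset q N) = q ^ N"
  unfolding Aset_eq by (simp add: card_lists_length_eq)

lemma IDFT_DFT:
  fixes c :: "'a::{finite,field} list \<Rightarrow> 'a"
  assumes "w \<in> Omega N"
  shows "IDFT N (DFT N c) w = c w"
proof -
  have "IDFT N (DFT N c) w = IDFT N (\<lambda>a. \<Sum>\<mu>\<in>(Omega N::'a list set). c \<mu> * monpow \<mu> a) w"
    unfolding DFT_def ..
  also have "\<dots> = (\<Sum>\<mu>\<in>(Omega N::'a list set). IDFT N (\<lambda>a. c \<mu> * monpow \<mu> a) w)"
    by (rule IDFT_sum[OF finite_Omega])
  also have "\<dots> = (\<Sum>\<mu>\<in>(Omega N::'a list set). c \<mu> * (if \<mu> = w then 1 else 0))"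
  proof (rule sum.cong[OF refl])
    fix \<mu> :: "'a list" assume "\<mu> \<in> Omega N"
    thus "IDFT N (\<lambda>a. c \<mu> * monpow \<mu> a) w = c \<mu> * (if \<mu> = w then 1 else 0)"
      using assms by (simp add: IDFT_scale kernel Omega_def)
  qed
  also have "\<dots> = (\<Sum>\<mu>\<in>(Omega N::'a list set). if \<mu> = w then c \<mu> else 0)"
    by (rule sum.cong) auto
  also have "\<dots> = c w" using assms by (subst sum.delta[OF finite_Omega]) simp
  finally show ?thesis .
qed

lemma DFT_cong: "(\<And>w. w \<in> Omega N \<Longrightarrow> c w = d w) \<Longrightarrow> DFT N c a = DFT N d a"
  unfolding DFT_def by (intro sum.cong) auto

lemma idx_in_Aset:
  assumes "card (UNIV :: 'a::{finite,field} set) = q" "l \<in> PiE I (\<lambda>_. {1..q-1})"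
  shows "idx q N I J l \<in> Aset q N"
proof -
  have q2: "q \<ge> 2" using ff_card_ge2[where 'a='a] assms(1) by simp
  have "l i < q" if "i \<in> I" for i using assms(2) that q2 by (auto simp: PiE_def Pi_def)
  thus ?thesis unfolding Aset_def idx_def using q2 by auto
qed

lemma IDFT_cong:
  fixes h g :: "nat list \<Rightarrow> 'a::{finite,field}"
  assumes "\<And>a. a \<in> Aset (card (UNIV :: 'a set)) N \<Longrightarrow> h a = g a"
  shows "IDFT N h w = IDFT N g w"
  unfolding IDFT_def Let_def
  using assms idx_in_Aset[OF refl, where 'a='a]
  by (intro arg_cong2[where f="(*)"] refl sum.cong) auto


lemma DFT_IDFT:
  fixes h :: "nat list \<Rightarrow> 'a::{finite,field}"
  assumes a: "a \<in> Aset (card (UNIV :: 'a set)) N"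
  shows "DFT N (IDFT N h) a = h a"
proof -
  let ?q = "card (UNIV :: 'a set)"
  let ?O = "Omega N :: 'a list set"
  let ?A = "Aset ?q N"
  define D where "D c = restrict (DFT N c) ?A" for c :: "'a list \<Rightarrow> 'a"
  define E where "E h = restrict (IDFT N h) ?O" for h :: "nat list \<Rightarrow> 'a"
  have ED: "E (D c) = c" if "c \<in> PiE ?O (\<lambda>_. UNIV)" for c
  proof
    fix w show "E (D c) w = c w"
    proof (cases "w \<in> ?O")
      case True
      have "IDFT N (D c) w = IDFT N (DFT N c) w"
        by (rule IDFT_cong) (simp add: D_def)
      thus ?thesis using True IDFT_DFT[OF True] by (simp add: E_def)
    next
      case False thus ?thesis using that by (simp add: E_def PiE_def extensional_def)
    qed
  qed
  have inj: "inj_on D (PiE ?O (\<lambda>_. UNIV))"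
    by (rule inj_on_inverseI[where g=E]) (rule ED)
  have sub: "D ` PiE ?O (\<lambda>_. UNIV) \<subseteq> PiE ?A (\<lambda>_. UNIV)"
    by (auto simp: D_def)
  have cards: "card (D ` PiE ?O (\<lambda>_. UNIV)) = card (PiE ?A (\<lambda>_. (UNIV::'a set)))"
    using card_image[OF inj] finite_Omega[of N, where 'a='a] finite_Aset[of ?q N]
    by (simp add: card_PiE card_Omega card_Aset)
  have img: "D ` PiE ?O (\<lambda>_. UNIV) = PiE ?A (\<lambda>_. UNIV)"
    by (rule card_subset_eq[OF _ sub cards]) (simp add: finite_PiE finite_Aset)
  define h' where "h' = restrict h ?A"
  have "h' \<in> PiE ?A (\<lambda>_. UNIV)" by (simp add: h'_def)
  then obtain c where c: "c \<in> PiE ?O (\<lambda>_. UNIV)" and hc: "h' = D c"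
    using img by (metis imageE)
  have "DFT N (IDFT N h) a = DFT N (IDFT N h') a"
    by (rule DFT_cong, rule IDFT_cong) (simp add: h'_def)
  also have "\<dots> = DFT N (E h') a"
    by (rule DFT_cong) (simp add: E_def)
  also have "\<dots> = DFT N c a" using ED[OF c] hc by simp
  also have "\<dots> = D c a" using a by (simp add: D_def)
  also have "\<dots> = h' a" using hc by simp
  also have "\<dots> = h a" using a by (simp add: h'_def)
  finally show ?thesis .
qed

theorem mainTheorem1:
  fixes N :: nat
  assumes "N \<ge> 1"
  shows "(\<forall>(c::'a::{finite,field} list \<Rightarrow> 'a) d (s::'a). \<forall>a\<in>Aset (card (UNIV :: 'a set)) N.
            DFT N (\<lambda>w. c w + s * d w) a = DFT N c a + s * DFT N d a)
       \<and> (\<forall>(h::nat list \<Rightarrow> 'a) g (s::'a). \<forall>w\<in>Omega N.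
            IDFT N (\<lambda>a. h a + s * g a) w = IDFT N h w + s * IDFT N g w)
       \<and> (\<forall>c::'a list \<Rightarrow> 'a. \<forall>w\<in>Omega N. IDFT N (DFT N c) w = c w)
       \<and> (\<forall>h::nat list \<Rightarrow> 'a. \<forall>a\<in>Aset (card (UNIV :: 'a set)) N. DFT N (IDFT N h) a = h a)"
  by (simp add: DFT_lin IDFT_lin IDFT_DFT DFT_IDFT)

end
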